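(* Let $\phi$ be a uniformly convex N-function. For every interior face $\gamma\in\mathcal F(\Omega)$ and every $v_h\in V_h$ at least one of the following two equivalences holds: \[ |[\![\nabla_h v_h]\!]_\gamma|\eqsim|[\![\gamma_\tau\nabla_h v_h]\!]_\gamma|\qquad\text{or}\qquad |[\![A(\nabla_h v_h)]\!]_\gamma|\eqsim|[\![A(\nabla_h v_h)\cdot\nu]\!]_\gamma|. \]
   Context: Let $d\in\{2,3\}$, let $\Omega\subset\mathbb R^d$ be a bounded polyhedral Lipschitz domain, and let $\mathcal T$ be a regular (conforming) triangulation of $\Omega$ into $d$-simplices with faces $\mathcal F$, interior faces $\mathcal F(\Omega)=\{\gamma\in\mathcal F:\gamma\not\subset\partial\Omega\}$ and boundary faces $\mathcal F(\partial\Omega)=\mathcal F\setminus\mathcal F(\Omega)$. A function $\varphi:[0,\infty)\to[0,\infty)$ is an N-function if it is continuous and convex and $\varphi(t)=\int_0^t\varphi'(s)\,ds$ for a right-continuous non-decreasing $\varphi'$ with $\varphi'(0)=0$, $\varphi'(t)>0$ for $t>0$, $\lim_{t\to\infty}\varphi'(t)=\infty$; it is uniformly convex if there are $0<c_{uc}\le C_{uc}<\infty$ with $c_{uc}\frac{\varphi'(s)-\varphi'(t)}{s-t}\le\frac{\varphi'(s)}{s}\le C_{uc}\frac{\varphi'(s)-\varphi'(t)}{s-t}$ for all $s>0$, $t\in[0,s)$. For $Q\in\mathbb R^d$, $A(Q)=\frac{\phi'(|Q|)}{|Q|}Q$ if $Q\ne0$ and $A(0)=0$. $V_h=\{v_h$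 piecewise affine on $\mathcal T$: $v_h$ is continuous at the barycenter of every $\gamma\in\mathcal F(\Omega)$ and vanishes at the barycenter of every $\gamma\in\mathcal F(\partial\Omega)\}$ is the Crouzeix--Raviart space and $\nabla_h$ the elementwise gradient. For $\gamma\in\mathcal F(\Omega)$ fix the two simplices $T_+,T_-\in\mathcal T$ with $\gamma=T_+\cap T_-$ and let $\nu$ be the unit normal of $\gamma$ pointing from $T_+$ to $T_-$; for a piecewise constant (scalar or vector-valued) $w$ the jump is $[\![w]\!]_\gamma=w|_{T_+}-w|_{T_-}$. The tangential trace is $\gamma_\tau Q=Q\cdot(-\nu_2,\nu_1)^\top$ for $d=2$ and $\gamma_\tau Q=Q\times\nu$ for $d=3$. $a\eqsim b$ means $c\,b\le a\le C\,b$ with $0<c\le C<\infty$ depending only on $c_{uc},C_{uc}$, $d$ and the shape regularity of $\mathcal T$. *)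

theory Defs
  imports "HOL-Analysis.Analysis" "HOL-Analysis.Cross3"
begin

definition N_function :: "(real \<Rightarrow> real) \<Rightarrow> (real \<Rightarrow> real) \<Rightarrow> bool" where
  "N_function phi phi' \<longleftrightarrow>
     (\<forall>t\<ge>0. phi t \<ge> 0) \<and> continuous_on {0..} phi \<and> convex_on {0..} phi \<and>
     (\<forall>t\<ge>0. (phi' has_integral phi t) {0..t}) \<and>
     (\<forall>t\<ge>0. continuous (at_right t) phi') \<and> mono_on {0..} phi' \<and>
     phi' 0 = 0 \<and> (\<forall>t>0. phi' t > 0) \<and> filterlim phi' at_top at_top"

definition uniformly_convex_N :: "real \<Rightarrow> real \<Rightarrow> (real \<Rightarrow> real) \<Rightarrow> (real \<Rightarrow> real) \<Rightarrow> bool" where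
  "uniformly_convex_N cuc Cuc phi phi' \<longleftrightarrow>
     N_function phi phi' \<and> 0 < cuc \<and> cuc \<le> Cuc \<and>
     (\<forall>s>0. \<forall>t. 0 \<le> t \<and> t < s \<longrightarrow>
        cuc * ((phi' s - phi' t) / (s - t)) \<le> phi' s / s \<and>
        phi' s / s \<le> Cuc * ((phi' s - phi' t) / (s - t)))"

definition A_flux :: "(real \<Rightarrow> real) \<Rightarrow> 'a::real_normed_vector \<Rightarrow> 'a" where
  "A_flux phi' Q = (if Q = 0 then 0 else (phi' (norm Q) / norm Q) *\<^sub>R Q)"

definition lipschitz_domain :: "'a::euclidean_space set \<Rightarrow> bool" where
  "lipschitz_domain \<Omega> \<longleftrightarrow> open \<Omega> \<and> connected \<Omega> \<and> bounded \<Omega> \<and> \<Omega> \<noteq> {} \<and>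
     (\<forall>x\<in>frontier \<Omega>. \<exists>e r L f. norm e = 1 \<and> r > 0 \<and> L \<ge> 0 \<and>
        (\<forall>y z. \<bar>f y - f z\<bar> \<le> L * norm (y - z)) \<and>
        \<Omega> \<inter> ball x r = {y \<in> ball x r. y \<bullet> e < f (y - (y \<bullet> e) *\<^sub>R e)})"

text \<open>A simplex is represented by its set of d+1 affinely independent vertices.\<close>
definition is_simplex :: "'a::euclidean_space set \<Rightarrow> bool" where
  "is_simplex V \<longleftrightarrow> finite V \<and> card V = DIM('a) + 1 \<and> \<not> affine_dependent V"

definition triangulation :: "'a::euclidean_space set \<Rightarrow> 'a set set \<Rightarrow> bool" where
  "triangulation \<Omega> \<T> \<longleftrightarrow> finite \<T> \<and> (\<forall>V\<in>\<T>. is_simplex V) \<and>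
     (\<forall>V\<in>\<T>. \<forall>W\<in>\<T>. convex hull V \<inter> convex hull W = convex hull (V \<inter> W)) \<and>
     (\<Union>V\<in>\<T>. convex hull V) = closure \<Omega>"

definition inradius :: "'a::euclidean_space set \<Rightarrow> real" where
  "inradius S = Sup {r. \<exists>x. cball x r \<subseteq> S}"

definition shape_regular :: "real \<Rightarrow> 'a::euclidean_space set set \<Rightarrow> bool" where
  "shape_regular \<sigma> \<T> \<longleftrightarrow> (\<forall>V\<in>\<T>. diameter (convex hull V) \<le> \<sigma> * inradius (convex hull V))"

definition faces :: "'a::euclidean_space set set \<Rightarrow> 'a set set" where
  "faces \<T> = {F. card F = DIM('a) \<and> (\<exists>V\<in>\<T>. F \<subseteq> V)}"

definition interior_faces :: "'a::euclidean_space set \<Rightarrow> 'a set set \<Rightarrow> 'a set set" where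
  "interior_faces \<Omega> \<T> = {F \<in> faces \<T>. \<not> (convex hull F \<subseteq> frontier \<Omega>)}"

definition boundary_faces :: "'a::euclidean_space set \<Rightarrow> 'a set set \<Rightarrow> 'a set set" where
  "boundary_faces \<Omega> \<T> = faces \<T> - interior_faces \<Omega> \<T>"

definition barycenter :: "'a::euclidean_space set \<Rightarrow> 'a" where
  "barycenter F = (1 / real (card F)) *\<^sub>R (\<Sum>p\<in>F. p)"

definition unit_normal_from :: "'a::euclidean_space set \<Rightarrow> 'a set \<Rightarrow> 'a \<Rightarrow> bool" where
  "unit_normal_from F Tp \<nu> \<longleftrightarrow> norm \<nu> = 1 \<and> (\<forall>p\<in>F. \<forall>q\<in>F. \<nu> \<bullet> (p - q) = 0) \<and>
     (\<forall>z\<in>Tp - F. \<forall>p\<in>F. \<nu> \<bullet> (z - p) < 0)"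

text \<open>A piecewise affine function is given elementwise: on the simplex V it is
  x \<mapsto> fst (v V) \<bullet> x + snd (v V); so fst (v V) is the elementwise gradient.\<close>
definition pw_value :: "('a::euclidean_space set \<Rightarrow> 'a \<times> real) \<Rightarrow> 'a set \<Rightarrow> 'a \<Rightarrow> real" where
  "pw_value v V x = fst (v V) \<bullet> x + snd (v V)"

definition grad_h :: "('a::euclidean_space set \<Rightarrow> 'a \<times> real) \<Rightarrow> 'a set \<Rightarrow> 'a" where
  "grad_h v V = fst (v V)"

definition CR_space :: "'a::euclidean_space set \<Rightarrow> 'a set set \<Rightarrow> ('a set \<Rightarrow> 'a \<times> real) set" where
  "CR_space \<Omega> \<T> = {v.
     (\<forall>F\<in>interior_faces \<Omega> \<T>. \<forall>V\<in>\<T>. \<forall>W\<in>\<T>. F \<subseteq> V \<longrightarrow> F \<subseteq> W \<longrightarrow>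
        pw_value v V (barycenter F) = pw_value v W (barycenter F)) \<and>
     (\<forall>F\<in>boundary_faces \<Omega> \<T>. \<forall>V\<in>\<T>. F \<subseteq> V \<longrightarrow> pw_value v V (barycenter F) = 0)}"

definition tang2 :: "real^2 \<Rightarrow> real^2 \<Rightarrow> real" where
  "tang2 \<nu> Q = Q \<bullet> vector [- (\<nu>$2), \<nu>$1]"

definition tang3 :: "real^3 \<Rightarrow> real^3 \<Rightarrow> real^3" where
  "tang3 \<nu> Q = cross3 Q \<nu>"

end

theory Submission
  imports Defs
begin


lemma aflux_eq: "A_flux phi' Q = (phi' (norm Q) / norm Q) *\<^sub>R Q"
  by (simp add: A_flux_def)

lemma key_ordered:
  fixes P R :: "'a::real_inner"
  assumes uc: "uniformly_convex_N cuc Cuc phi phi'" and le: "norm R \<le> norm P"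
  defines "k \<equiv> min cuc (1/Cuc)"
  shows "k * (norm (A_flux phi' P - A_flux phi' R))\<^sup>2 * (norm (P - R))\<^sup>2
           \<le> ((A_flux phi' P - A_flux phi' R) \<bullet> (P - R))\<^sup>2
         \<and> 0 \<le> (A_flux phi' P - A_flux phi' R) \<bullet> (P - R)"
proof -
  have N: "N_function phi phi'" and cpos: "0 < cuc" and cC: "cuc \<le> Cuc"
    and U: "\<And>s t. s > 0 \<Longrightarrow> 0 \<le> t \<Longrightarrow> t < s \<Longrightarrow>
        cuc * ((phi' s - phi' t) / (s - t)) \<le> phi' s / s \<and>
        phi' s / s \<le> Cuc * ((phi' s - phi' t) / (s - t))"
    using uc unfolding uniformly_convex_N_def by auto
  have mono: "mono_on {0..} phi'" and p0: "phi' 0 = 0" and ppos: "\<And>t. t > 0 \<Longrightarrow> phi' t > 0"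
    using N unfolding N_function_def by auto
  have c1: "cuc \<le> 1"
  proof -
    have "cuc * ((phi' 1 - phi' 0) / (1 - 0)) \<le> phi' 1 / 1" using U[of 1 0] by simp
    then have "cuc * phi' 1 \<le> 1 * phi' 1" using p0 by simp
    then show ?thesis using ppos[of 1] by (simp add: mult_le_cancel_right)
  qed
  have Cpos: "Cuc > 0" using cpos cC by simp
  define s where "s = norm P"
  define t where "t = norm R"
  define as where "as = phi' s / s"
  define bt where "bt = phi' t / t"
  have t0: "0 \<le> t" and ts: "t \<le> s" using le by (auto simp: s_def t_def)
  have phinn: "\<And>x. 0 \<le> x \<Longrightarrow> 0 \<le> phi' x"
    using mono p0 by (metis atLeast_iff mono_onD order_refl)
  have as0: "0 \<le> as" unfolding as_def using phinn[of s] t0 ts by simp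
  have bt0: "0 \<le> bt" unfolding bt_def using phinn[of t] t0 by simp
  have u: "as * s = phi' s" unfolding as_def using p0 by (cases "s = 0") auto
  have w: "bt * t = phi' t" unfolding bt_def using p0 by (cases "t = 0") auto
  define e where "e = phi' s - phi' t"
  define d where "d = s - t"
  have e0: "0 \<le> e" unfolding e_def using mono t0 ts by (simp add: mono_onD)
  have d0: "0 \<le> d" unfolding d_def using ts by simp
  have B: "cuc * e \<le> as * d \<and> as * d \<le> Cuc * e"
  proof (cases "t < s")
    case True
    then have sp: "s > 0" using t0 by simp
    have dp: "d > 0" using True d_def by simp
    from U[OF sp t0 True] have "cuc * (e / d) \<le> as" "as \<le> Cuc * (e / d)"
      by (auto simp: e_def d_def as_def)
    then show ?thesis using dp by (simp add: pos_divide_le_eq pos_le_divide_eq)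
  next
    case False
    then have "s = t" using ts by simp
    then show ?thesis by (simp add: e_def d_def)
  qed
  have k0: "0 \<le> k" "k \<le> cuc" "k \<le> 1/Cuc" using cpos Cpos by (auto simp: k_def)
  have k1: "k \<le> 1" using k0 c1 by simp
  have kC: "k * Cuc \<le> 1" using k0(3) Cpos by (simp add: field_simps)
  define x where "x = P \<bullet> R"
  define y where "y = s * t - x"
  have y0: "0 \<le> y" unfolding y_def x_def s_def t_def
    using norm_cauchy_schwarz[of P R] by simp
  have AP: "A_flux phi' P = as *\<^sub>R P" by (simp add: aflux_eq as_def s_def)
  have AR: "A_flux phi' R = bt *\<^sub>R R" by (simp add: aflux_eq bt_def t_def)
  have PP: "P \<bullet> P = s\<^sup>2" by (simp add: s_def dot_square_norm)
  have RR: "R \<bullet> R = t\<^sup>2" by (simp add: t_def dot_square_norm)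
  have RP: "R \<bullet> P = x" by (simp add: x_def inner_commute)
  have I1: "(A_flux phi' P - A_flux phi' R) \<bullet> (P - R) = e * d + (as + bt) * y"
  proof -
    have "(A_flux phi' P - A_flux phi' R) \<bullet> (P - R) = as * s\<^sup>2 - as * x - bt * x + bt * t\<^sup>2"
      by (simp add: AP AR inner_diff_left inner_diff_right PP RR RP x_def)
    also have "\<dots> = e * d + (as + bt) * y"
      unfolding e_def d_def y_def u[symmetric] w[symmetric] by (simp add: power2_eq_square algebra_simps)
    finally show ?thesis .
  qed
  have I2: "(norm (A_flux phi' P - A_flux phi' R))\<^sup>2 = e\<^sup>2 + 2 * as * bt * y"
  proof -
    have "(norm (A_flux phi' P - A_flux phi' R))\<^sup>2 = as\<^sup>2 * s\<^sup>2 - 2 * as * bt * x + bt\<^sup>2 * t\<^sup>2"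
      unfolding AP AR power2_norm_eq_inner by (simp add: inner_diff_left inner_diff_right PP RR RP x_def power2_eq_square algebra_simps)
    also have "\<dots> = e\<^sup>2 + 2 * as * bt * y"
      unfolding e_def y_def u[symmetric] w[symmetric] by (simp add: power2_eq_square algebra_simps)
    finally show ?thesis .
  qed
  have I3: "(norm (P - R))\<^sup>2 = d\<^sup>2 + 2 * y"
    unfolding power2_norm_eq_inner by (simp add: inner_diff_left inner_diff_right PP RR RP x_def d_def y_def power2_eq_square algebra_simps)
  have T1: "k * (e\<^sup>2 * d\<^sup>2) \<le> e\<^sup>2 * d\<^sup>2"
    using k1 k0(1) by (intro mult_left_le_one_le) auto
  have T2: "k * (2 * e\<^sup>2 * y) \<le> 2 * e * d * as * y"
  proof -
    have "k * e \<le> as * d" using k0(2) B e0 by (meson mult_right_mono order_trans)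
    then have "k * e * (2 * e * y) \<le> as * d * (2 * e * y)" using e0 y0 by (intro mult_right_mono) auto
    then show ?thesis by (simp add: power2_eq_square algebra_simps)
  qed
  have T3: "k * (2 * as * bt * y * d\<^sup>2) \<le> 2 * e * d * bt * y"
  proof -
    have "k * (as * d) \<le> k * (Cuc * e)" using B k0 by (simp add: mult_left_mono)
    also have "\<dots> = (k * Cuc) * e" by simp
    also have "\<dots> \<le> e" using kC e0 k0(1) Cpos by (intro mult_left_le_one_le) auto
    finally have "k * (as * d) \<le> e" .
    then have "k * (as * d) * (2 * bt * y * d) \<le> e * (2 * bt * y * d)"
      using bt0 y0 d0 by (intro mult_right_mono) auto
    then show ?thesis by (simp add: power2_eq_square algebra_simps)
  qed
  have T4: "k * (4 * as * bt * y\<^sup>2) \<le> (as + bt)\<^sup>2 * y\<^sup>2"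
  proof -
    have "k * (4 * as * bt) \<le> 4 * as * bt" using k1 as0 bt0 k0(1) by (intro mult_left_le_one_le) auto
    also have "\<dots> \<le> (as + bt)\<^sup>2"
    proof -
      have "(as + bt)\<^sup>2 - 4 * as * bt = (as - bt)\<^sup>2" by (simp add: power2_eq_square algebra_simps)
      then show ?thesis using zero_le_power2[of "as - bt"] by linarith
    qed
    finally have "k * (4 * as * bt) * y\<^sup>2 \<le> (as + bt)\<^sup>2 * y\<^sup>2" by (intro mult_right_mono) auto
    then show ?thesis by (simp add: algebra_simps)
  qed
  have "k * (e\<^sup>2 + 2 * as * bt * y) * (d\<^sup>2 + 2 * y) =
        k * (e\<^sup>2 * d\<^sup>2) + k * (2 * e\<^sup>2 * y) + k * (2 * as * bt * y * d\<^sup>2) + k * (4 * as * bt * y\<^sup>2)"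
    by (simp add: power2_eq_square algebra_simps)
  also have "\<dots> \<le> e\<^sup>2 * d\<^sup>2 + 2 * e * d * as * y + 2 * e * d * bt * y + (as + bt)\<^sup>2 * y\<^sup>2"
    using T1 T2 T3 T4 by linarith
  also have "\<dots> = (e * d + (as + bt) * y)\<^sup>2" by (simp add: power2_eq_square algebra_simps)
  finally have main: "k * (e\<^sup>2 + 2 * as * bt * y) * (d\<^sup>2 + 2 * y) \<le> (e * d + (as + bt) * y)\<^sup>2" .
  show ?thesis unfolding I1 I2 I3 using main e0 d0 as0 bt0 y0 by simp
qed

lemma key_sym:
  fixes P R :: "'a::real_inner"
  assumes uc: "uniformly_convex_N cuc Cuc phi phi'"
  shows "min cuc (1/Cuc) * (norm (A_flux phi' P - A_flux phi' R))\<^sup>2 * (norm (P - R))\<^sup>2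
           \<le> ((A_flux phi' P - A_flux phi' R) \<bullet> (P - R))\<^sup>2
         \<and> 0 \<le> (A_flux phi' P - A_flux phi' R) \<bullet> (P - R)"
proof (cases "norm R \<le> norm P")
  case True
  then show ?thesis using key_ordered[OF uc True] by simp
next
  case False
  then have "norm P \<le> norm R" by simp
  from key_ordered[OF uc this] show ?thesis
    by (simp add: norm_minus_commute inner_diff_left inner_diff_right algebra_simps)
qed

lemma key_sqrt:
  fixes P R :: "'a::real_inner"
  assumes uc: "uniformly_convex_N cuc Cuc phi phi'"
  shows "sqrt (min cuc (1/Cuc)) * norm (A_flux phi' P - A_flux phi' R) * norm (P - R)
           \<le> (A_flux phi' P - A_flux phi' R) \<bullet> (P - R)"
proof -
  define k where "k = min cuc (1/Cuc)"
  define a where "a = norm (A_flux phi' P - A_flux phi' R)"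
  define b where "b = norm (P - R)"
  define Y where "Y = (A_flux phi' P - A_flux phi' R) \<bullet> (P - R)"
  have h: "k * a\<^sup>2 * b\<^sup>2 \<le> Y\<^sup>2" "0 \<le> Y" using key_sym[OF uc, of P R]
    by (simp_all add: k_def a_def b_def Y_def)
  have "sqrt (k * a\<^sup>2 * b\<^sup>2) \<le> sqrt (Y\<^sup>2)" using h(1) by (rule real_sqrt_le_mono)
  moreover have "sqrt (k * a\<^sup>2 * b\<^sup>2) = sqrt k * a * b"
    by (simp add: real_sqrt_mult a_def b_def)
  moreover have "sqrt (Y\<^sup>2) = Y" using h(2) by simp
  ultimately show ?thesis by (simp add: k_def a_def b_def Y_def)
qed

lemma alt:
  fixes P R nu :: "'a::real_inner"
  assumes uc: "uniformly_convex_N cuc Cuc phi phi'" and nu: "norm nu = 1"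
    and g: "0 < g" "g \<le> sqrt (min cuc (1/Cuc))"
    and T: "T = sqrt ((norm (P - R))\<^sup>2 - ((P - R) \<bullet> nu)\<^sup>2)"
  shows "norm (P - R) \<le> (2/g) * T \<or>
         norm (A_flux phi' P - A_flux phi' R) \<le> (2/g) * \<bar>(A_flux phi' P - A_flux phi' R) \<bullet> nu\<bar>"
proof (cases "norm (P - R) \<le> (2/g) * T")
  case True
  then show ?thesis by simp
next
  case False
  define q where "q = P - R"
  define a where "a = A_flux phi' P - A_flux phi' R"
  from False have qT: "(2/g) * T < norm q" by (simp add: q_def)
  define tv where "tv = q - (q \<bullet> nu) *\<^sub>R nu"
  have nn: "nu \<bullet> nu = 1" using nu by (simp add: dot_square_norm)
  have tvn: "(norm tv)\<^sup>2 = (norm q)\<^sup>2 - (q \<bullet> nu)\<^sup>2"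
    unfolding tv_def power2_norm_eq_inner
    by (simp add: inner_diff_left inner_diff_right nn inner_commute power2_eq_square algebra_simps)
  have tvT: "norm tv = T" unfolding T q_def[symmetric] tvn[symmetric] by simp
  have T0: "0 \<le> T" using tvT norm_ge_zero by metis
  have qpos: "0 < norm q" using qT T0 g by (smt (verit) divide_pos_pos mult_nonneg_nonneg)
  have Tq: "T < g / 2 * norm q"
  proof -
    have "(2/g) * T * (g/2) < norm q * (g/2)" using qT g by (intro mult_strict_right_mono) auto
    then show ?thesis using g by (simp add: algebra_simps)
  qed
  have dec: "a \<bullet> q = (q \<bullet> nu) * (a \<bullet> nu) + a \<bullet> tv"
    unfolding tv_def by (simp add: inner_diff_right)
  have b1: "(q \<bullet> nu) * (a \<bullet> nu) \<le> norm q * \<bar>a \<bullet> nu\<bar>"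
  proof -
    have "\<bar>q \<bullet> nu\<bar> \<le> norm q" using Cauchy_Schwarz_ineq2[of q nu] nu by simp
    then have "\<bar>q \<bullet> nu\<bar> * \<bar>a \<bullet> nu\<bar> \<le> norm q * \<bar>a \<bullet> nu\<bar>" by (intro mult_right_mono) auto
    moreover have "(q \<bullet> nu) * (a \<bullet> nu) \<le> \<bar>q \<bullet> nu\<bar> * \<bar>a \<bullet> nu\<bar>" by (simp add: abs_mult[symmetric])
    ultimately show ?thesis by linarith
  qed
  have b2: "a \<bullet> tv \<le> norm a * T" using Cauchy_Schwarz_ineq2[of a tv] tvT by simp
  have b3: "norm a * T \<le> norm a * (g / 2 * norm q)" using Tq by (intro mult_left_mono) auto
  have ks: "g * norm a * norm q \<le> a \<bullet> q"
  proof -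
    have "g * norm a * norm q \<le> sqrt (min cuc (1/Cuc)) * norm a * norm q"
      using g by (intro mult_right_mono) auto
    also have "\<dots> \<le> a \<bullet> q" using key_sqrt[OF uc, of P R] by (simp add: a_def q_def)
    finally show ?thesis .
  qed
  have "g * norm a * norm q \<le> norm q * \<bar>a \<bullet> nu\<bar> + norm a * (g / 2 * norm q)"
    using ks dec b1 b2 b3 by linarith
  then have "(g / 2 * norm a) * norm q \<le> \<bar>a \<bullet> nu\<bar> * norm q" by (simp add: algebra_simps)
  then have "g / 2 * norm a \<le> \<bar>a \<bullet> nu\<bar>" using qpos by simp
  then have "norm a \<le> (2/g) * \<bar>a \<bullet> nu\<bar>" using g by (simp add: field_simps)
  then show ?thesis by (simp add: a_def)
qed

lemma tang2_id: "(tang2 nu q)\<^sup>2 + (q \<bullet> nu)\<^sup>2 = (norm q)\<^sup>2 * (norm nu)\<^sup>2"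
  unfolding tang2_def power2_norm_eq_inner
  by (simp add: inner_vec_def sum_2 vector_2 power2_eq_square algebra_simps)

lemma tang2_diff: "tang2 nu P - tang2 nu R = tang2 nu (P - R)"
  by (simp add: tang2_def inner_diff_left)

lemma tang3_diff: "tang3 nu P - tang3 nu R = tang3 nu (P - R)"
  by (simp add: tang3_def Cross3.left_diff_distrib)

lemma tang3_id: "(norm (tang3 nu q))\<^sup>2 + (q \<bullet> nu)\<^sup>2 = (norm q)\<^sup>2 * (norm nu)\<^sup>2"
  unfolding tang3_def using norm_cross_dot[of q nu] by (simp add: power_mult_distrib)

lemma trivA:
  fixes a nu :: "'a::real_inner"
  assumes "norm nu = 1" "0 < g" "g \<le> 1"
  shows "g / 2 * \<bar>a \<bullet> nu\<bar> \<le> norm a"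
proof -
  have "\<bar>a \<bullet> nu\<bar> \<le> norm a" using Cauchy_Schwarz_ineq2[of a nu] assms by simp
  moreover have "g / 2 * \<bar>a \<bullet> nu\<bar> \<le> \<bar>a \<bullet> nu\<bar>" using assms by (intro mult_left_le_one_le) auto
  ultimately show ?thesis by linarith
qed

lemma dim2:
  fixes P R nu :: "real^2"
  assumes uc: "uniformly_convex_N cuc Cuc phi phi'" and nu: "norm nu = 1"
    and g: "0 < g" "g \<le> 1" "g \<le> sqrt (min cuc (1/Cuc))"
  shows "(g/2 * \<bar>tang2 nu P - tang2 nu R\<bar> \<le> norm (P - R) \<and>
           norm (P - R) \<le> 2/g * \<bar>tang2 nu P - tang2 nu R\<bar>) \<or>
          (g/2 * \<bar>A_flux phi' P \<bullet> nu - A_flux phi' R \<bullet> nu\<bar>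
              \<le> norm (A_flux phi' P - A_flux phi' R) \<and>
           norm (A_flux phi' P - A_flux phi' R)
              \<le> 2/g * \<bar>A_flux phi' P \<bullet> nu - A_flux phi' R \<bullet> nu\<bar>)"
proof -
  define T where "T = sqrt ((norm (P - R))\<^sup>2 - ((P - R) \<bullet> nu)\<^sup>2)"
  have id: "(tang2 nu (P - R))\<^sup>2 = (norm (P - R))\<^sup>2 - ((P - R) \<bullet> nu)\<^sup>2"
    using tang2_id[of nu "P - R"] nu by simp
  have TT: "\<bar>tang2 nu P - tang2 nu R\<bar> = T"
    unfolding T_def tang2_diff id[symmetric] by simp
  have Tle: "T \<le> norm (P - R)"
    unfolding T_def by (rule real_le_lsqrt) auto
  have t1: "g/2 * \<bar>tang2 nu P - tang2 nu R\<bar> \<le> norm (P - R)"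
  proof -
    have T0: "0 \<le> T" using TT abs_ge_zero by metis
    have "g/2 * T \<le> T" using T0 g by (intro mult_left_le_one_le) auto
    then show ?thesis unfolding TT using Tle by linarith
  qed
  have t2: "g / 2 * \<bar>(A_flux phi' P - A_flux phi' R) \<bullet> nu\<bar> \<le> norm (A_flux phi' P - A_flux phi' R)"
    by (rule trivA[OF nu g(1,2)])
  from alt[OF uc nu g(1,3) T_def] t1 t2 show ?thesis
    unfolding TT by (simp add: inner_diff_left)
qed

lemma dim3:
  fixes P R nu :: "real^3"
  assumes uc: "uniformly_convex_N cuc Cuc phi phi'" and nu: "norm nu = 1"
    and g: "0 < g" "g \<le> 1" "g \<le> sqrt (min cuc (1/Cuc))"
  shows "(g/2 * norm (tang3 nu P - tang3 nu R) \<le> norm (P - R) \<and>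
           norm (P - R) \<le> 2/g * norm (tang3 nu P - tang3 nu R)) \<or>
          (g/2 * \<bar>A_flux phi' P \<bullet> nu - A_flux phi' R \<bullet> nu\<bar>
              \<le> norm (A_flux phi' P - A_flux phi' R) \<and>
           norm (A_flux phi' P - A_flux phi' R)
              \<le> 2/g * \<bar>A_flux phi' P \<bullet> nu - A_flux phi' R \<bullet> nu\<bar>)"
proof -
  define T where "T = sqrt ((norm (P - R))\<^sup>2 - ((P - R) \<bullet> nu)\<^sup>2)"
  have id: "(norm (tang3 nu (P - R)))\<^sup>2 = (norm (P - R))\<^sup>2 - ((P - R) \<bullet> nu)\<^sup>2"
    using tang3_id[of nu "P - R"] nu by simp
  have TT: "norm (tang3 nu P - tang3 nu R) = T"
    unfolding T_def tang3_diff id[symmetric] by simp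
  have Tle: "T \<le> norm (P - R)"
    unfolding T_def by (rule real_le_lsqrt) auto
  have T0: "0 \<le> T" using TT norm_ge_zero by metis
  have t1: "g/2 * norm (tang3 nu P - tang3 nu R) \<le> norm (P - R)"
  proof -
    have "g/2 * T \<le> T" using T0 g by (intro mult_left_le_one_le) auto
    then show ?thesis unfolding TT using Tle by linarith
  qed
  have t2: "g / 2 * \<bar>(A_flux phi' P - A_flux phi' R) \<bullet> nu\<bar> \<le> norm (A_flux phi' P - A_flux phi' R)"
    by (rule trivA[OF nu g(1,2)])
  from alt[OF uc nu g(1,3) T_def] t1 t2 show ?thesis
    unfolding TT by (simp add: inner_diff_left)
qed

theorem lemma3p1:
  shows
  "(\<forall>cuc Cuc \<sigma>. 0 < cuc \<and> cuc \<le> Cuc \<longrightarrow>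
     (\<exists>c C. 0 < c \<and> c \<le> C \<and>
       (\<forall>(\<Omega> :: (real^2) set) \<T> phi phi' F Tp Tm \<nu> v.
          lipschitz_domain \<Omega> \<and> triangulation \<Omega> \<T> \<and> shape_regular \<sigma> \<T> \<and>
          uniformly_convex_N cuc Cuc phi phi' \<and>
          F \<in> interior_faces \<Omega> \<T> \<and> Tp \<in> \<T> \<and> Tm \<in> \<T> \<and> Tp \<noteq> Tm \<and>
          convex hull Tp \<inter> convex hull Tm = convex hull F \<and>
          unit_normal_from F Tp \<nu> \<and> v \<in> CR_space \<Omega> \<T> \<longrightarrow>
          (c * \<bar>tang2 \<nu> (grad_h v Tp) - tang2 \<nu> (grad_h v Tm)\<bar> \<le> norm (grad_h v Tp - grad_h v Tm) \<and>
           norm (grad_h v Tp - grad_h v Tm) \<le> C * \<bar>tang2 \<nu> (grad_h v Tp) - tang2 \<nu> (grad_h v Tm)\<bar>) \<or>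
          (c * \<bar>A_flux phi' (grad_h v Tp) \<bullet> \<nu> - A_flux phi' (grad_h v Tm) \<bullet> \<nu>\<bar>
              \<le> norm (A_flux phi' (grad_h v Tp) - A_flux phi' (grad_h v Tm)) \<and>
           norm (A_flux phi' (grad_h v Tp) - A_flux phi' (grad_h v Tm))
              \<le> C * \<bar>A_flux phi' (grad_h v Tp) \<bullet> \<nu> - A_flux phi' (grad_h v Tm) \<bullet> \<nu>\<bar>))))
   \<and>
   (\<forall>cuc Cuc \<sigma>. 0 < cuc \<and> cuc \<le> Cuc \<longrightarrow>
     (\<exists>c C. 0 < c \<and> c \<le> C \<and>
       (\<forall>(\<Omega> :: (real^3) set) \<T> phi phi' F Tp Tm \<nu> v.
          lipschitz_domain \<Omega> \<and> triangulation \<Omega> \<T> \<and> shape_regular \<sigma> \<T> \<and>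
          uniformly_convex_N cuc Cuc phi phi' \<and>
          F \<in> interior_faces \<Omega> \<T> \<and> Tp \<in> \<T> \<and> Tm \<in> \<T> \<and> Tp \<noteq> Tm \<and>
          convex hull Tp \<inter> convex hull Tm = convex hull F \<and>
          unit_normal_from F Tp \<nu> \<and> v \<in> CR_space \<Omega> \<T> \<longrightarrow>
          (c * norm (tang3 \<nu> (grad_h v Tp) - tang3 \<nu> (grad_h v Tm)) \<le> norm (grad_h v Tp - grad_h v Tm) \<and>
           norm (grad_h v Tp - grad_h v Tm) \<le> C * norm (tang3 \<nu> (grad_h v Tp) - tang3 \<nu> (grad_h v Tm))) \<or>
          (c * \<bar>A_flux phi' (grad_h v Tp) \<bullet> \<nu> - A_flux phi' (grad_h v Tm) \<bullet> \<nu>\<bar>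
              \<le> norm (A_flux phi' (grad_h v Tp) - A_flux phi' (grad_h v Tm)) \<and>
           norm (A_flux phi' (grad_h v Tp) - A_flux phi' (grad_h v Tm))
              \<le> C * \<bar>A_flux phi' (grad_h v Tp) \<bullet> \<nu> - A_flux phi' (grad_h v Tm) \<bullet> \<nu>\<bar>))))"
  proof (intro conjI allI impI)
  fix cuc Cuc :: real and \<sigma> :: real
  assume h: "0 < cuc \<and> cuc \<le> Cuc"
  define g where "g = min 1 (sqrt (min cuc (1/Cuc)))"
  have gp: "0 < g" using h by (simp add: g_def)
  have g1: "g \<le> 1" "g \<le> sqrt (min cuc (1/Cuc))" by (simp_all add: g_def)
  have cC: "g/2 \<le> 2/g"
  proof -
    have "g/2 \<le> 1" using g1 by simp
    moreover have "1 \<le> 2/g" using gp g1 by (simp add: le_divide_eq)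
    ultimately show ?thesis by linarith
  qed
  show "\<exists>c C. 0 < c \<and> c \<le> C \<and>
       (\<forall>(\<Omega> :: (real^2) set) \<T> phi phi' F Tp Tm \<nu> v.
          lipschitz_domain \<Omega> \<and> triangulation \<Omega> \<T> \<and> shape_regular \<sigma> \<T> \<and>
          uniformly_convex_N cuc Cuc phi phi' \<and>
          F \<in> interior_faces \<Omega> \<T> \<and> Tp \<in> \<T> \<and> Tm \<in> \<T> \<and> Tp \<noteq> Tm \<and>
          convex hull Tp \<inter> convex hull Tm = convex hull F \<and>
          unit_normal_from F Tp \<nu> \<and> v \<in> CR_space \<Omega> \<T> \<longrightarrow>
          (c * \<bar>tang2 \<nu> (grad_h v Tp) - tang2 \<nu> (grad_h v Tm)\<bar> \<le> norm (grad_h v Tp - grad_h v Tm) \<and>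
           norm (grad_h v Tp - grad_h v Tm) \<le> C * \<bar>tang2 \<nu> (grad_h v Tp) - tang2 \<nu> (grad_h v Tm)\<bar>) \<or>
          (c * \<bar>A_flux phi' (grad_h v Tp) \<bullet> \<nu> - A_flux phi' (grad_h v Tm) \<bullet> \<nu>\<bar>
              \<le> norm (A_flux phi' (grad_h v Tp) - A_flux phi' (grad_h v Tm)) \<and>
           norm (A_flux phi' (grad_h v Tp) - A_flux phi' (grad_h v Tm))
              \<le> C * \<bar>A_flux phi' (grad_h v Tp) \<bullet> \<nu> - A_flux phi' (grad_h v Tm) \<bullet> \<nu>\<bar>))"
    apply (rule exI[of _ "g/2"], rule exI[of _ "2/g"])
    apply (intro conjI allI impI)
      apply (use gp in simp)
     apply (rule cC)
    apply (elim conjE)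
    apply (rule dim2[OF _ _ gp g1])
     apply assumption
    apply (simp add: unit_normal_from_def)
    done
next
  fix cuc Cuc :: real and \<sigma> :: real
  assume h: "0 < cuc \<and> cuc \<le> Cuc"
  define g where "g = min 1 (sqrt (min cuc (1/Cuc)))"
  have gp: "0 < g" using h by (simp add: g_def)
  have g1: "g \<le> 1" "g \<le> sqrt (min cuc (1/Cuc))" by (simp_all add: g_def)
  have cC: "g/2 \<le> 2/g"
  proof -
    have "g/2 \<le> 1" using g1 by simp
    moreover have "1 \<le> 2/g" using gp g1 by (simp add: le_divide_eq)
    ultimately show ?thesis by linarith
  qed
  show "\<exists>c C. 0 < c \<and> c \<le> C \<and>
       (\<forall>(\<Omega> :: (real^3) set) \<T> phi phi' F Tp Tm \<nu> v.
          lipschitz_domain \<Omega> \<and> triangulation \<Omega> \<T> \<and> shape_regular \<sigma> \<T> \<and>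
          uniformly_convex_N cuc Cuc phi phi' \<and>
          F \<in> interior_faces \<Omega> \<T> \<and> Tp \<in> \<T> \<and> Tm \<in> \<T> \<and> Tp \<noteq> Tm \<and>
          convex hull Tp \<inter> convex hull Tm = convex hull F \<and>
          unit_normal_from F Tp \<nu> \<and> v \<in> CR_space \<Omega> \<T> \<longrightarrow>
          (c * norm (tang3 \<nu> (grad_h v Tp) - tang3 \<nu> (grad_h v Tm)) \<le> norm (grad_h v Tp - grad_h v Tm) \<and>
           norm (grad_h v Tp - grad_h v Tm) \<le> C * norm (tang3 \<nu> (grad_h v Tp) - tang3 \<nu> (grad_h v Tm))) \<or>
          (c * \<bar>A_flux phi' (grad_h v Tp) \<bullet> \<nu> - A_flux phi' (grad_h v Tm) \<bullet> \<nu>\<bar>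
              \<le> norm (A_flux phi' (grad_h v Tp) - A_flux phi' (grad_h v Tm)) \<and>
           norm (A_flux phi' (grad_h v Tp) - A_flux phi' (grad_h v Tm))
              \<le> C * \<bar>A_flux phi' (grad_h v Tp) \<bullet> \<nu> - A_flux phi' (grad_h v Tm) \<bullet> \<nu>\<bar>))"
    apply (rule exI[of _ "g/2"], rule exI[of _ "2/g"])
    apply (intro conjI allI impI)
      apply (use gp in simp)
     apply (rule cC)
    apply (elim conjE)
    apply (rule dim3[OF _ _ gp g1])
     apply assumption
    apply (simp add: unit_normal_from_def)
    done
qed

end
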